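(* Let $M=\Gamma\backslash\mathbf{H}^3$ be a non-compact hyperbolic $3$-manifold, $C$ the maximal representative of a cusp of $M$, and suppose (after conjugating $\Gamma$) that two tangent horoballs of the preimage of $C$ in $\mathbf{H}^3$ are centered at $0$ and $\infty$, denoted $B_0$ and $B_\infty=\{x_3>h\}$ with $h>0$. If $\gamma\in\Gamma$ is a loxodromic element with $\gamma(B_0)=B_\infty$, and $b=\gamma(\infty)\in\mathbf{C}$, then $$2\cosh(\ell_\gamma/2)\;\le\;\frac{\sqrt{4h^2+|b|^2}}{h},$$ where $\ell_\gamma$ is the translation length of $\gamma$.
   Context: Hyperbolic manifolds are complete, of constant curvature $-1$, of finite volume, possibly non-orientable; $\Gamma\subset\mathsf{Isom}(\mathbf{H}^3)$ is discrete torsion-free. We use the upper half-space model $\mathbf{H}^3=\{x_1+x_2i+x_3j:\ x_3>0\}$ with boundary $\mathbf{C}\cup\{\infty\}$. For $x\in\partial\mathbf{H}^3$, $\Gamma_x$ is its stabilizer in $\Gamma$. A cusp region is $\Gamma_x\backslash B$, with $B$ an open horoball centered at a parabolic fixed point $x$ such that no element of $\Gamma\setminus\Gamma_x$ identifies two points of $B$; a cusp is an equivalence class of cusp regions under "one contains the other", and its maximal representative is the union of its members. The preimage of the maximal representative in $\mathbf{H}^3$ is a $\Gamma$-invariant family of horoballs with disjoint interiors, some of which are tangent. *)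

theory Defs
  imports "HOL-Analysis.Analysis"
begin

text \<open>Upper half-space model: a point x1 + x2 i + x3 j is the pair (x1 + x2 i, x3) with x3 > 0.
  Boundary points are elements of complex option, None standing for infinity.\<close>

type_synonym pt = "complex \<times> real"

definition H3 :: "pt set" where
  "H3 = {p. snd p > 0}"

definition hdist :: "pt \<Rightarrow> pt \<Rightarrow> real" where
  "hdist p q = arcosh (1 + ((cmod (fst p - fst q))\<^sup>2 + (snd p - snd q)\<^sup>2) / (2 * snd p * snd q))"

text \<open>Isometries of H3, extended by the identity outside H3 (so that composition / inverse
  form a genuine group of functions).\<close>
definition isometry :: "(pt \<Rightarrow> pt) \<Rightarrow> bool" where
  "isometry f \<longleftrightarrow> bij_betw f H3 H3 \<and> (\<forall>p\<in>H3. \<forall>q\<in>H3. hdist (f p) (f q) = hdist p q)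
      \<and> (\<forall>p. p \<notin> H3 \<longrightarrow> f p = p)"

definition transl_len :: "(pt \<Rightarrow> pt) \<Rightarrow> real" where
  "transl_len g = Inf {hdist p (g p) | p. p \<in> H3}"

definition loxodromic :: "(pt \<Rightarrow> pt) \<Rightarrow> bool" where
  "loxodromic g \<longleftrightarrow> isometry g \<and> transl_len g > 0 \<and> (\<exists>p\<in>H3. hdist p (g p) = transl_len g)"

definition parabolic :: "(pt \<Rightarrow> pt) \<Rightarrow> bool" where
  "parabolic g \<longleftrightarrow> isometry g \<and> \<not> (\<exists>p\<in>H3. hdist p (g p) = transl_len g)"

text \<open>Boundary extension: the geodesic ray towards the boundary point zeta is mapped by g
  to a curve converging (in the closed upper half-space plus infinity) to eta.\<close>
fun ray :: "complex option \<Rightarrow> real \<Rightarrow> pt" where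
  "ray None t = (0, t)"
| "ray (Some z) t = (z, t)"

fun rayfilter :: "complex option \<Rightarrow> real filter" where
  "rayfilter None = at_top"
| "rayfilter (Some z) = at_right 0"

fun converges_to :: "complex option \<Rightarrow> (real \<Rightarrow> pt) \<Rightarrow> real filter \<Rightarrow> bool" where
  "converges_to None c F = filterlim (\<lambda>t. norm (c t)) at_top F"
| "converges_to (Some w) c F = (c \<longlongrightarrow> (w, 0)) F"

definition bext :: "(pt \<Rightarrow> pt) \<Rightarrow> complex option \<Rightarrow> complex option \<Rightarrow> bool" where
  "bext g \<zeta> \<eta> \<longleftrightarrow> converges_to \<eta> (\<lambda>t. g (ray \<zeta> t)) (rayfilter \<zeta>)"

text \<open>Open horoballs; for a finite centre, s is the Euclidean diameter; at infinity, s is the height.\<close>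
fun horo :: "complex option \<Rightarrow> real \<Rightarrow> pt set" where
  "horo None s = {p. snd p > s}"
| "horo (Some z) s = {p. snd p > 0 \<and> (cmod (fst p - z))\<^sup>2 + (snd p - s / 2)\<^sup>2 < (s / 2)\<^sup>2}"

definition horoball :: "complex option \<Rightarrow> pt set \<Rightarrow> bool" where
  "horoball \<zeta> B \<longleftrightarrow> (\<exists>s>0. B = horo \<zeta> s)"

definition isom_group :: "(pt \<Rightarrow> pt) set \<Rightarrow> bool" where
  "isom_group \<Gamma> \<longleftrightarrow> (\<forall>g\<in>\<Gamma>. isometry g) \<and> id \<in> \<Gamma> \<and> (\<forall>g\<in>\<Gamma>. \<forall>k\<in>\<Gamma>. g \<circ> k \<in> \<Gamma>)
      \<and> (\<forall>g\<in>\<Gamma>. inv g \<in> \<Gamma>)"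

text \<open>Discreteness (for subgroups of Isom(H3) equivalent to proper discontinuity).\<close>
definition discrete_group :: "(pt \<Rightarrow> pt) set \<Rightarrow> bool" where
  "discrete_group \<Gamma> \<longleftrightarrow> (\<forall>p\<in>H3. \<forall>r. finite {g\<in>\<Gamma>. hdist p (g p) \<le> r})"

definition torsion_free :: "(pt \<Rightarrow> pt) set \<Rightarrow> bool" where
  "torsion_free \<Gamma> \<longleftrightarrow> (\<forall>g\<in>\<Gamma>. \<forall>n::nat. n > 0 \<and> g ^^ n = id \<longrightarrow> g = id)"

text \<open>Finite hyperbolic volume of the quotient: a Borel strict fundamental set of finite
  hyperbolic volume (volume element dx1 dx2 dx3 / x3^3).\<close>
definition finite_volume :: "(pt \<Rightarrow> pt) set \<Rightarrow> bool" where
  "finite_volume \<Gamma> \<longleftrightarrow> (\<exists>F. F \<in> sets borel \<and> F \<subseteq> H3 \<and>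
      (\<forall>p\<in>H3. \<exists>!q. q \<in> F \<and> (\<exists>g\<in>\<Gamma>. q = g p)) \<and>
      (\<integral>\<^sup>+ p. ennreal (1 / (snd p) ^ 3) * indicator F p \<partial>lborel) < \<infinity>)"

definition noncompact_quotient :: "(pt \<Rightarrow> pt) set \<Rightarrow> bool" where
  "noncompact_quotient \<Gamma> \<longleftrightarrow> \<not> (\<exists>K. compact K \<and> K \<subseteq> H3 \<and> H3 \<subseteq> (\<Union>g\<in>\<Gamma>. g ` K))"

definition hyperbolic_manifold_group :: "(pt \<Rightarrow> pt) set \<Rightarrow> bool" where
  "hyperbolic_manifold_group \<Gamma> \<longleftrightarrow> isom_group \<Gamma> \<and> discrete_group \<Gamma> \<and> torsion_free \<Gamma> \<and> finite_volume \<Gamma>"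

definition parabolic_fixed_point :: "(pt \<Rightarrow> pt) set \<Rightarrow> complex option \<Rightarrow> bool" where
  "parabolic_fixed_point \<Gamma> \<zeta> \<longleftrightarrow> (\<exists>g\<in>\<Gamma>. parabolic g \<and> bext g \<zeta> \<zeta>)"

text \<open>B is a horoball at a parabolic fixed point zeta such that Gamma_zeta \ B is a cusp region:
  no element of Gamma outside the stabilizer of zeta identifies two points of B.\<close>
definition cusp_horoball :: "(pt \<Rightarrow> pt) set \<Rightarrow> complex option \<Rightarrow> pt set \<Rightarrow> bool" where
  "cusp_horoball \<Gamma> \<zeta> B \<longleftrightarrow> parabolic_fixed_point \<Gamma> \<zeta> \<and> horoball \<zeta> B \<and>
      (\<forall>g\<in>\<Gamma>. \<not> bext g \<zeta> \<zeta> \<longrightarrow> (\<forall>p\<in>B. g p \<notin> B))"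

definition max_cusp_horoball :: "(pt \<Rightarrow> pt) set \<Rightarrow> complex option \<Rightarrow> pt set \<Rightarrow> bool" where
  "max_cusp_horoball \<Gamma> \<zeta> B \<longleftrightarrow> cusp_horoball \<Gamma> \<zeta> B \<and> (\<forall>B'. cusp_horoball \<Gamma> \<zeta> B' \<longrightarrow> B' \<subseteq> B)"

definition cusp_preimage_horoballs :: "(pt \<Rightarrow> pt) set \<Rightarrow> pt set \<Rightarrow> pt set set" where
  "cusp_preimage_horoballs \<Gamma> B = (\<lambda>g. g ` B) ` \<Gamma>"

end

theory Submission
  imports Defs
begin


definition Aq :: "pt \<Rightarrow> pt \<Rightarrow> real" where
  "Aq p q = 1 + ((cmod (fst p - fst q))\<^sup>2 + (snd p - snd q)\<^sup>2) / (2 * snd p * snd q)"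

definition gg :: "real \<Rightarrow> real" where "gg r = (r + 1/r)/2"

lemma Aq_ge1: "p \<in> H3 \<Longrightarrow> q \<in> H3 \<Longrightarrow> 1 \<le> Aq p q"
  unfolding Aq_def H3_def by (auto intro!: divide_nonneg_pos)

lemma hdist_Aq: "hdist p q = arcosh (Aq p q)"
  unfolding hdist_def Aq_def ..

lemma iso_Aq:
  assumes "isometry f" "p \<in> H3" "q \<in> H3"
  shows "Aq (f p) (f q) = Aq p q"
proof -
  have fp: "f p \<in> H3" "f q \<in> H3" using assms unfolding isometry_def bij_betw_def by auto
  have "arcosh (Aq (f p) (f q)) = arcosh (Aq p q)"
    using assms unfolding isometry_def hdist_Aq by auto
  then have "cosh (arcosh (Aq (f p) (f q))) = cosh (arcosh (Aq p q))" by simp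
  then show ?thesis using Aq_ge1[OF fp] Aq_ge1[OF assms(2,3)] by simp
qed

lemma Aq_lower:
  assumes "snd p > 0" "snd q > 0"
  shows "gg (snd q / snd p) \<le> Aq p q"
proof -
  let ?u = "snd p" and ?v = "snd q" and ?d = "cmod (fst p - fst q)"
  have "Aq p q = (?d\<^sup>2 + ?u\<^sup>2 + ?v\<^sup>2) / (2 * ?u * ?v)"
    unfolding Aq_def using assms by (simp add: field_simps power2_eq_square)
  moreover have "gg (?v / ?u) = (?u\<^sup>2 + ?v\<^sup>2) / (2 * ?u * ?v)"
    unfolding gg_def using assms by (simp add: field_simps power2_eq_square)
  moreover have "(?u\<^sup>2 + ?v\<^sup>2) / (2 * ?u * ?v) \<le> (?d\<^sup>2 + ?u\<^sup>2 + ?v\<^sup>2) / (2 * ?u * ?v)"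
    using assms by (intro divide_right_mono) auto
  ultimately show ?thesis by simp
qed

lemma Aq_vert:
  assumes "u > 0" "v > 0"
  shows "Aq (w, u) (w, v) = gg (v / u)"
  unfolding Aq_def gg_def using assms by (simp add: field_simps power2_eq_square)

lemma gg_mono: assumes "1 \<le> r" "r < s" shows "gg r < gg s"
proof -
  have "gg s - gg r = (s - r) * (1 - 1 / (r * s)) / 2"
    unfolding gg_def using assms by (simp add: field_simps)
  moreover have "1 < r * s" using assms
    by (metis less_eq_real_def less_le_trans mult_less_le_imp_less zero_less_one mult_1_left)
  then have "1 / (r * s) < 1" by simp
  then have "0 < (s - r) * (1 - 1 / (r * s))" using assms by simp
  ultimately have "0 < gg s - gg r" by simp
  then show ?thesis by linarith
qed

lemma gg_less_imp: assumes "1 \<le> r" "1 \<le> s" "gg r < gg s" shows "r < s"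
proof (rule ccontr)
  assume "\<not> r < s"
  then have "s = r \<or> s < r" by linarith
  then show False using gg_mono[of s r] assms by auto
qed

lemma gg_inv: "a \<noteq> 0 \<Longrightarrow> b \<noteq> 0 \<Longrightarrow> gg (a / b) = gg (b / a)"
  unfolding gg_def by simp

lemma horiz_alg:
  fixes h t d :: real
  assumes "h > 0" "t > 0"
    and "1 + (d + (h - h\<^sup>2 / t)\<^sup>2) / (2 * h * (h\<^sup>2 / t)) = gg (t / h)"
  shows "d = 0"
proof -
  have e1: "(h - h\<^sup>2 / t)\<^sup>2 / (2 * h * (h\<^sup>2 / t)) = (t - h)\<^sup>2 / (2 * t * h)"
    using assms by (simp add: field_simps power2_eq_square)
  have e2: "gg (t / h) = 1 + (t - h)\<^sup>2 / (2 * t * h)"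
    unfolding gg_def using assms by (simp add: field_simps power2_eq_square)
  have "(d + (h - h\<^sup>2 / t)\<^sup>2) / (2 * h * (h\<^sup>2 / t)) = d / (2 * h * (h\<^sup>2 / t)) + (h - h\<^sup>2 / t)\<^sup>2 / (2 * h * (h\<^sup>2 / t))"
    by (rule add_divide_distrib)
  with assms(3) e1 e2 have "d / (2 * h * (h\<^sup>2 / t)) = 0" by linarith
  then show ?thesis using assms by simp
qed



theorem lemma5:
  fixes \<Gamma> :: "(pt \<Rightarrow> pt) set" and \<zeta> :: "complex option" and B :: "pt set"
    and h :: real and \<gamma> :: "pt \<Rightarrow> pt" and b :: complex
  assumes "hyperbolic_manifold_group \<Gamma>"
    and "noncompact_quotient \<Gamma>"
    and "max_cusp_horoball \<Gamma> \<zeta> B"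
    and "h > 0"
    and "horo None h \<in> cusp_preimage_horoballs \<Gamma> B"
    and "horo (Some 0) h \<in> cusp_preimage_horoballs \<Gamma> B"
    and "\<gamma> \<in> \<Gamma>" and "loxodromic \<gamma>"
    and "\<gamma> ` horo (Some 0) h = horo None h"
    and "bext \<gamma> None (Some b)"
  shows "2 * cosh (transl_len \<gamma> / 2) \<le> sqrt (4 * h\<^sup>2 + (cmod b)\<^sup>2) / h"
proof -
  have hpos: "h > 0" by fact
  have iso: "isometry \<gamma>" using assms(8) unfolding loxodromic_def by simp
  then have bij: "bij_betw \<gamma> H3 H3" unfolding isometry_def by simp
  then have inj: "inj_on \<gamma> H3" and img: "\<gamma> ` H3 = H3" unfolding bij_betw_def by auto
  have inH: "\<gamma> p \<in> H3" if "p \<in> H3" for p using img that by blast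
  have B0H: "horo (Some 0) h \<subseteq> H3" unfolding H3_def by auto
  have GB: "\<gamma> ` horo (Some 0) h = horo None h" by fact
  have B0mem: "(0::complex, s) \<in> horo (Some 0) h" if "0 < s" "s < h" for s
  proof -
    have e: "(s - h/2)\<^sup>2 - (h/2)\<^sup>2 = s * (s - h)" by (simp add: power2_eq_square algebra_simps)
    have "s * (s - h) < 0" using that by (intro mult_pos_neg) auto
    then have "(cmod (0::complex))\<^sup>2 + (s - h/2)\<^sup>2 < (h/2)\<^sup>2" using e by simp
    then show ?thesis using that by (simp only: horo.simps mem_Collect_eq fst_conv snd_conv diff_zero)
  qed
  have B0lt: "snd z < h" if "z \<in> horo (Some 0) h" for z
  proof -
    have "(cmod (fst z - 0))\<^sup>2 + (snd z - h/2)\<^sup>2 < (h/2)\<^sup>2" using that by simp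
    moreover have "0 \<le> (cmod (fst z - 0))\<^sup>2" by simp
    ultimately have "(snd z - h/2)\<^sup>2 < (h/2)\<^sup>2" by linarith
    moreover have "0 \<le> h/2" using hpos by simp
    ultimately have "snd z - h/2 < h/2" by (rule power2_less_imp_less)
    then show ?thesis by simp
  qed
  have height: "snd (\<gamma> (0, t)) = h\<^sup>2 / t" if th: "t \<ge> h" for t
  proof -
    have tpos: "t > 0" using th hpos by simp
    have xH: "(0::complex, t) \<in> H3" using tpos unfolding H3_def by simp
    have xnB: "(0::complex, t) \<notin> horo (Some 0) h"
    proof
      assume "(0::complex, t) \<in> horo (Some 0) h"
      then have "snd (0::complex, t) < h" by (rule B0lt)
      then show False using th by simp
    qed
    define y where "y = \<gamma> (0, t)"
    define u where "u = snd y"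
    define w where "w = fst y"
    have yH: "y \<in> H3" unfolding y_def using inH xH by simp
    then have upos: "u > 0" unfolding u_def H3_def by simp
    have yw: "y = (w, u)" unfolding u_def w_def by simp
    have ynB: "y \<notin> horo None h"
    proof
      assume "y \<in> horo None h"
      then have "y \<in> \<gamma> ` horo (Some 0) h" unfolding GB .
      then obtain z0 where z0': "y = \<gamma> z0" "z0 \<in> horo (Some 0) h" by (rule imageE)
      have z0: "z0 \<in> horo (Some 0) h" "\<gamma> z0 = y" using z0' by simp_all
      then have "z0 = (0, t)" using inj B0H xH unfolding y_def inj_on_def by blast
      then show False using z0 xnB by simp
    qed
    then have uh: "u \<le> h" unfolding u_def by simp
    have dir1: "t * u < v * h" if vh: "v > h" for v
    proof -
      have "(w, v) \<in> horo None h" using vh by simp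
      then have "(w, v) \<in> \<gamma> ` horo (Some 0) h" unfolding GB .
      then obtain z0 where z0': "(w, v) = \<gamma> z0" "z0 \<in> horo (Some 0) h" by (rule imageE)
      have z0: "z0 \<in> horo (Some 0) h" "\<gamma> z0 = (w, v)" using z0' by simp_all
      have z0H: "z0 \<in> H3" using z0 B0H by auto
      have v0pos: "snd z0 > 0" using z0H unfolding H3_def by simp
      have v0h: "snd z0 < h" using B0lt z0 by simp
      have "Aq y (w, v) = Aq (0, t) z0" unfolding y_def using iso_Aq[OF iso xH z0H] z0 by simp
      moreover have "Aq y (w, v) = gg (v / u)" unfolding yw using Aq_vert upos vh hpos by simp
      moreover have "gg (snd z0 / t) \<le> Aq (0, t) z0" using Aq_lower[of "(0,t)" z0] tpos v0pos by simp
      moreover have "gg (snd z0 / t) = gg (t / snd z0)" using gg_inv tpos v0pos by simp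
      moreover have "t / h < t / snd z0" using tpos v0pos v0h by (simp add: frac_less2)
      moreover have "1 \<le> t / h" using th hpos by simp
      ultimately have "gg (t / h) < gg (v / u)" using gg_mono[of "t/h" "t / snd z0"] by linarith
      moreover have "1 \<le> v / u" using upos uh vh by simp
      ultimately have "t / h < v / u" using gg_less_imp \<open>1 \<le> t / h\<close> by blast
      then show ?thesis using hpos upos by (simp add: field_simps)
    qed
    have u1: "t * u \<le> h * h"
    proof (rule ccontr)
      assume "\<not> ?thesis"
      then have c: "h * h < t * u" by simp
      define v where "v = (h * h + t * u) / (2 * h)"
      have vh: "v > h" unfolding v_def using c hpos by (simp add: field_simps)
      have "2 * (v * h) = h * h + t * u" unfolding v_def using hpos by (simp add: field_simps)
      moreover have "t * u < v * h" by (rule dir1[OF vh])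
      ultimately show False using c by linarith
    qed
    have dir2: "h * s < t * u" if s: "0 < s" "s < h" for s
    proof -
      have z0B: "(0::complex, s) \<in> horo (Some 0) h" using B0mem s by simp
      have z0H: "(0::complex, s) \<in> H3" using z0B B0H by auto
      define z where "z = \<gamma> (0, s)"
      have "z \<in> \<gamma> ` horo (Some 0) h" unfolding z_def using z0B by (rule imageI)
      then have zB: "z \<in> horo None h" using GB by simp
      then have zh: "snd z > h" by simp
      have "Aq y z = Aq (0, t) (0, s)" unfolding y_def z_def using iso_Aq[OF iso xH z0H] by simp
      moreover have "Aq (0::complex, t) (0, s) = gg (s / t)" using Aq_vert tpos s by simp
      moreover have "gg (s / t) = gg (t / s)" using gg_inv tpos s by simp
      moreover have "gg (snd z / snd y) \<le> Aq y z"
        by (rule Aq_lower) (use upos zh hpos in \<open>simp_all add: u_def\<close>)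
      then have "gg (snd z / u) \<le> Aq y z" unfolding u_def .
      moreover have "h / u < snd z / u" using zh upos by (rule divide_strict_right_mono)
      moreover have "1 \<le> h / u" using uh upos by simp
      ultimately have "gg (h / u) < gg (t / s)" using gg_mono[of "h/u" "snd z / u"] by linarith
      moreover have "1 \<le> t / s" using s th by simp
      ultimately have "h / u < t / s" using gg_less_imp \<open>1 \<le> h / u\<close> by blast
      then show ?thesis using s upos by (simp add: field_simps)
    qed
    have u2: "h * h \<le> t * u"
    proof (rule ccontr)
      assume "\<not> ?thesis"
      then have c: "t * u < h * h" by simp
      define s where "s = (t * u / h + h) / 2"
      have "0 < t * u / h" using tpos upos hpos by simp
      then have s0: "0 < s" unfolding s_def using hpos by simp
      have sh: "s < h" unfolding s_def using c hpos by (simp add: field_simps)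
      have "2 * (h * s) = t * u + h * h" unfolding s_def using hpos by (simp add: field_simps)
      moreover have "h * s < t * u" by (rule dir2[OF s0 sh])
      ultimately show False using c by linarith
    qed
    from u1 u2 have "t * u = h * h" by simp
    then have "u = h\<^sup>2 / t" using tpos by (simp add: field_simps power2_eq_square)
    then show ?thesis unfolding u_def y_def .
  qed
  define c where "c = fst (\<gamma> (0, h))"
  have "snd (\<gamma> (0, h)) = h\<^sup>2 / h" by (rule height) simp
  also have "\<dots> = h" using hpos by (simp add: power2_eq_square)
  finally have ph: "\<gamma> (0, h) = (c, h)" unfolding c_def by (simp add: prod_eq_iff)
  have horiz: "\<gamma> (0, t) = (c, h\<^sup>2 / t)" if th: "t \<ge> h" for t
  proof -
    have tpos: "t > 0" using th hpos by simp
    have xH: "(0::complex, t) \<in> H3" using tpos unfolding H3_def by simp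
    have pH: "(0::complex, h) \<in> H3" using hpos unfolding H3_def by simp
    define w where "w = fst (\<gamma> (0, t))"
    have yw: "\<gamma> (0, t) = (w, h\<^sup>2 / t)" using height[OF th] unfolding w_def by (metis prod.collapse)
    have "Aq (\<gamma> (0, h)) (\<gamma> (0, t)) = Aq (0, h) (0, t)" using iso_Aq[OF iso pH xH] by simp
    also have "\<dots> = gg (t / h)" using Aq_vert hpos tpos by simp
    finally have "1 + ((cmod (c - w))\<^sup>2 + (h - h\<^sup>2 / t)\<^sup>2) / (2 * h * (h\<^sup>2 / t)) = gg (t / h)"
      unfolding ph yw Aq_def by simp
    then have "(cmod (c - w))\<^sup>2 = 0" using horiz_alg hpos tpos by blast
    then have "w = c" by simp
    then show ?thesis using yw by simp
  qed
  have lim1: "((\<lambda>t. \<gamma> (0, t)) \<longlongrightarrow> (b, 0)) at_top"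
    using assms(10) unfolding bext_def by simp
  have ev: "eventually (\<lambda>t. (c, h\<^sup>2 / t) = \<gamma> (0, t)) at_top"
    using eventually_ge_at_top[of h]
  proof (rule eventually_mono)
    fix t assume "h \<le> t"
    then show "(c, h\<^sup>2 / t) = \<gamma> (0, t)" using horiz by simp
  qed
  have lim0: "((\<lambda>t::real. h\<^sup>2 / t) \<longlongrightarrow> 0) at_top"
    by (intro tendsto_divide_0[OF tendsto_const] filterlim_at_top_imp_at_infinity filterlim_ident)
  have "((\<lambda>t::real. (c, h\<^sup>2 / t)) \<longlongrightarrow> (c, 0)) at_top"
    by (intro tendsto_Pair tendsto_const lim0)
  then have lim2: "((\<lambda>t. \<gamma> (0, t)) \<longlongrightarrow> (c, 0)) at_top"
    using tendsto_cong[OF ev] by simp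
  have "(b, 0) = (c, (0::real))" using tendsto_unique[OF _ lim1 lim2] by simp
  then have bc: "b = c" by simp
  have pH: "(0::complex, h) \<in> H3" using hpos unfolding H3_def by simp
  define D where "D = hdist (0, h) (\<gamma> (0, h))"
  have AD: "Aq (0::complex, h) (b, h) = 1 + (cmod b)\<^sup>2 / (2 * h * h)" unfolding Aq_def by simp
  have AD1: "1 \<le> Aq (0::complex, h) (b, h)" unfolding AD using hpos by simp
  have Dv: "D = arcosh (1 + (cmod b)\<^sup>2 / (2 * h * h))" unfolding D_def hdist_Aq ph bc[symmetric] AD ..
  have coshD: "cosh D = 1 + (cmod b)\<^sup>2 / (2 * h * h)" unfolding Dv using AD AD1 by simp
  have D0: "D \<ge> 0" unfolding Dv using AD AD1 by simp
  let ?S = "{hdist p (\<gamma> p) | p. p \<in> H3}"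
  have Snn: "\<forall>x\<in>?S. 0 \<le> x"
  proof
    fix x assume "x \<in> ?S"
    then obtain p where p: "p \<in> H3" "x = hdist p (\<gamma> p)" by blast
    then have "1 \<le> Aq p (\<gamma> p)" using Aq_ge1 inH by blast
    then show "0 \<le> x" unfolding p hdist_Aq by simp
  qed
  have DS: "D \<in> ?S" unfolding D_def using pH by blast
  have Tle: "transl_len \<gamma> \<le> D" unfolding transl_len_def
    by (rule cInf_lower[OF DS]) (use Snn in \<open>auto simp: bdd_below_def\<close>)
  have T0: "0 \<le> transl_len \<gamma>" unfolding transl_len_def
    by (rule cInf_greatest) (use DS Snn in auto)
  have c1: "cosh (transl_len \<gamma> / 2) \<le> cosh (D / 2)"
    using Tle T0 D0 by (subst cosh_real_nonneg_le_iff) auto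
  have "cosh D = 2 * (cosh (D / 2))\<^sup>2 - 1" using cosh_double_cosh[of "D/2"] by simp
  then have sq: "(2 * cosh (D / 2))\<^sup>2 = (4 * h\<^sup>2 + (cmod b)\<^sup>2) / h\<^sup>2"
    using coshD hpos by (simp add: field_simps power2_eq_square)
  have "2 * cosh (D / 2) = sqrt ((2 * cosh (D / 2))\<^sup>2)"
    by (subst real_sqrt_abs) (use cosh_real_pos[of "D/2"] in simp)
  also have "\<dots> = sqrt (4 * h\<^sup>2 + (cmod b)\<^sup>2) / h"
    unfolding sq real_sqrt_divide using hpos by simp
  finally show ?thesis using c1 by linarith
qed

end
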